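(* Let $G=(V,E)$ be a finite graph with adjacency matrix $A$, and let $I,J\subset V$ be disjoint sets of cardinality $b$. Assume that there exists at least one path matching from $I$ to $J$ and that all minimal path matchings from $I$ to $J$ have the same matching map. Let $|V|-\ell$ be the length of a minimal path matching. If $m_1,\dots,m_r$ are the multiplicities of the distinct eigenvalues $\lambda_1,\dots,\lambda_r$ of $A$, then $$\sum_{i=1}^r(m_i-b)_+\le\ell.$$ Consequently, for any $1\le k\le r$, $m_1+\dots+m_k\le kb+\ell$.
   Context: For disjoint $I=\{i_1,\dots,i_b\}$, $J=\{j_1,\dots,j_b\}\subset V$, a path matching from $I$ to $J$ is a collection $\Pi=\{\pi_1,\dots,\pi_b\}$ of pairwise vertex-disjoint self-avoiding paths $\pi_s=(u_{s,1},\dots,u_{s,p_s})$ in $G$ such that, for some permutation $\sigma$ of $\{1,\dots,b\}$, $u_{s,1}=i_s$ and $u_{s,p_s}=j_{\sigma(s)}$ for all $s$; $\sigma$ is its matching map. Its length is $|\Pi|=\sum_s p_s$ (the total number of vertices on the paths). A minimal path matching is one of minimal length. $x_+=\max(x,0)$. *)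

theory Defs
  imports "Jordan_Normal_Form.Char_Poly"
begin

text \<open>A finite simple graph on vertex set V = {0..<n}: an edge relation E that is
  symmetric and irreflexive on V (edges outside V are ignored).\<close>

definition simple_graph :: "nat \<Rightarrow> (nat \<Rightarrow> nat \<Rightarrow> bool) \<Rightarrow> bool" where
  "simple_graph n E \<longleftrightarrow> (\<forall>u<n. \<forall>v<n. E u v \<longleftrightarrow> E v u) \<and> (\<forall>v<n. \<not> E v v)"

definition adjacency_matrix :: "nat \<Rightarrow> (nat \<Rightarrow> nat \<Rightarrow> bool) \<Rightarrow> real mat" where
  "adjacency_matrix n E = mat n n (\<lambda>(i, j). if E i j then 1 else 0)"

definition sa_path :: "nat \<Rightarrow> (nat \<Rightarrow> nat \<Rightarrow> bool) \<Rightarrow> nat list \<Rightarrow> bool" where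
  "sa_path n E p \<longleftrightarrow> p \<noteq> [] \<and> distinct p \<and> set p \<subseteq> {0..<n}
     \<and> (\<forall>k. Suc k < length p \<longrightarrow> E (p ! k) (p ! Suc k))"

definition path_matching ::
  "nat \<Rightarrow> (nat \<Rightarrow> nat \<Rightarrow> bool) \<Rightarrow> nat set \<Rightarrow> nat set \<Rightarrow> (nat \<Rightarrow> nat list) \<Rightarrow> bool" where
  "path_matching n E I J P \<longleftrightarrow>
     (\<forall>i\<in>I. sa_path n E (P i) \<and> hd (P i) = i)
     \<and> (\<forall>i\<in>I. \<forall>i'\<in>I. i \<noteq> i' \<longrightarrow> set (P i) \<inter> set (P i') = {})
     \<and> bij_betw (\<lambda>i. last (P i)) I J"

definition matching_map :: "(nat \<Rightarrow> nat list) \<Rightarrow> nat \<Rightarrow> nat" where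
  "matching_map P i = last (P i)"

definition pm_length :: "nat set \<Rightarrow> (nat \<Rightarrow> nat list) \<Rightarrow> nat" where
  "pm_length I P = (\<Sum>i\<in>I. length (P i))"

definition min_path_matching ::
  "nat \<Rightarrow> (nat \<Rightarrow> nat \<Rightarrow> bool) \<Rightarrow> nat set \<Rightarrow> nat set \<Rightarrow> (nat \<Rightarrow> nat list) \<Rightarrow> bool" where
  "min_path_matching n E I J P \<longleftrightarrow> path_matching n E I J P
     \<and> (\<forall>Q. path_matching n E I J Q \<longrightarrow> pm_length I P \<le> pm_length I Q)"

definition eig_mult :: "real mat \<Rightarrow> real \<Rightarrow> nat" where
  "eig_mult A x = order x (char_poly A)"

end

theory Submission
  imports Defs "Jordan_Normal_Form.Schur_Decomposition" "HOL-Combinatorics.Cycles"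
begin


lemma orthonormal_basis_hd:
  fixes v :: "real vec" assumes v: "v \<in> carrier_vec n" and v0: "v \<noteq> 0\<^sub>v n"
  shows "\<exists>W \<in> carrier_mat n n. transpose_mat W * W = 1\<^sub>m n \<and> (\<exists>c. col W 0 = c \<cdot>\<^sub>v v)"
proof -
  interpret cof_vec_space n "TYPE(real)" .
  define b where "b = basis_completion v"
  from basis_completion[OF v v0, folded b_def]
  have dist_b: "distinct b" 
    and indep: "\<not> lin_dep (set b)" and b: "set b \<subseteq> carrier_vec n" and hdb: "hd b = v" 
    and len_b: "length b = n" by auto
  have n: "n \<noteq> 0"
  proof
    assume "n = 0"
    with v have "v = 0\<^sub>v n" by (intro eq_vecI) auto
    with v0 show False by simp
  qed
  from hdb len_b n obtain vs where bv: "b = v # vs" by (cases b, auto)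
  define ws where "ws = gram_schmidt n b"
  from gram_schmidt_result[OF b dist_b indep ws_def]
  have ws: "set ws \<subseteq> carrier_vec n" "corthogonal ws" "length ws = n" 
    by (auto simp: len_b)
  have hdws: "hd ws = v" unfolding ws_def bv using gram_schmidt_hd[OF v] by simp
  define s where "s = (\<lambda>w::real vec. 1 / sqrt (w \<bullet> w))"
  define us where "us = map (\<lambda>w. s w \<cdot>\<^sub>v w) ws"
  define W where "W = mat_of_cols n us"
  have lus: "length us = n" using ws by (simp add: us_def)
  have wsi: "i < n \<Longrightarrow> ws ! i \<in> carrier_vec n" for i using ws by auto
  have usi: "i < n \<Longrightarrow> us ! i = s (ws ! i) \<cdot>\<^sub>v ws ! i" for i using ws by (simp add: us_def)
  have usc: "i < n \<Longrightarrow> us ! i \<in> carrier_vec n" for i using usi wsi by auto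
  have W: "W \<in> carrier_mat n n" unfolding W_def using mat_of_cols_carrier(1)[of n us] lus by simp
  have colW: "i < n \<Longrightarrow> col W i = us ! i" for i unfolding W_def
    by (rule col_mat_of_cols, insert lus usc, auto)
  have orth: "i < n \<Longrightarrow> j < n \<Longrightarrow> ws ! i \<bullet> ws ! j = 0 \<longleftrightarrow> i \<noteq> j" for i j
    using corthogonalD[OF ws(2), of i j] ws(3) by (simp add: vec_conjugate_real)
  have pos: "i < n \<Longrightarrow> ws ! i \<bullet> ws ! i > 0" for i
  proof -
    assume i: "i < n"
    have "ws ! i \<bullet> ws ! i \<ge> 0" using conjugate_square_ge_0_vec[of "ws ! i"] by (simp add: vec_conjugate_real)
    moreover have "ws ! i \<bullet> ws ! i \<noteq> 0" using orth[OF i i] by simp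
    ultimately show ?thesis by simp
  qed
  have "transpose_mat W * W = 1\<^sub>m n"
  proof (rule eq_matI)
    fix i j assume i: "i < dim_row (1\<^sub>m n)" and j: "j < dim_col (1\<^sub>m n)"
    hence i: "i < n" and j: "j < n" by auto
    have "(transpose_mat W * W) $$ (i, j) = col W i \<bullet> col W j"
      using i j W by (simp add: index_mult_mat)
    also have "\<dots> = s (ws ! i) * s (ws ! j) * (ws ! i \<bullet> ws ! j)"
      unfolding colW[OF i] colW[OF j] usi[OF i] usi[OF j]
      using wsi[OF i] wsi[OF j] by (simp add: smult_scalar_prod_distrib scalar_prod_smult_distrib)
    also have "\<dots> = 1\<^sub>m n $$ (i, j)"
    proof (cases "i = j")
      case True
      have p: "ws ! i \<bullet> ws ! i > 0" using pos[OF i] .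
      have "s (ws ! i) * s (ws ! i) * (ws ! i \<bullet> ws ! i) = 1"
        unfolding s_def using p
        by (simp add: field_simps)
      then show ?thesis using True i by simp
    next
      case False
      then show ?thesis using orth[OF i j] i j by simp
    qed
    finally show "(transpose_mat W * W) $$ (i, j) = 1\<^sub>m n $$ (i, j)" .
  qed (insert W, auto)
  moreover have "col W 0 = s v \<cdot>\<^sub>v v"
  proof -
    have "ws ! 0 = v" using hdws ws(3) n by (metis hd_conv_nth list.size(3))
    thus ?thesis using colW[of 0] usi[of 0] n by simp
  qed
  ultimately show ?thesis using W by blast
qed

lemma char_poly_1x1: "char_poly (mat 1 1 (\<lambda>_. e)) = [:- e, 1:]"
  by (simp add: char_poly_defs det_def sign_def)

lemma sym_eig_cols:
  fixes A :: "real mat"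
  assumes "A \<in> carrier_mat n n" "transpose_mat A = A" "k \<le> Polynomial.order la (char_poly A)"
  shows "\<exists>P \<in> carrier_mat n n. det P \<noteq> 0 \<and> (\<forall>c<k. A *\<^sub>v col P c = la \<cdot>\<^sub>v col P c)"
  using assms
proof (induct k arbitrary: n A)
  case 0
  show ?case by (rule bexI[of _ "1\<^sub>m n"], auto)
next
  case (Suc k n A)
  note A = Suc(2) and sym = Suc(3) and ord = Suc(4)
  have cp0: "char_poly A \<noteq> 0" using degree_monic_char_poly[OF A] by auto
  have "poly (char_poly A) la = 0" using ord cp0 order_root[of "char_poly A" la] by simp
  hence ev: "eigenvalue A la" using eigenvalue_root_char_poly[OF A] by simp
  define v where "v = find_eigenvector A la"
  from find_eigenvector[OF A ev] have "eigenvector A v la" unfolding v_def .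
  hence v: "v \<in> carrier_vec n" and v0: "v \<noteq> 0\<^sub>v n" and Av: "A *\<^sub>v v = la \<cdot>\<^sub>v v"
    using A unfolding eigenvector_def by auto
  have n: "n \<noteq> 0" using eigenvalue_imp_nonzero_dim[OF A ev] by simp
  from orthonormal_basis_hd[OF v v0] obtain W c where W: "W \<in> carrier_mat n n"
    and WW: "transpose_mat W * W = 1\<^sub>m n" and cW: "col W 0 = c \<cdot>\<^sub>v v" by auto
  have WT: "transpose_mat W \<in> carrier_mat n n" using W by auto
  have WW2: "W * transpose_mat W = 1\<^sub>m n" using mat_mult_left_right_inverse[OF WT W WW] .
  define A' where "A' = transpose_mat W * A * W"
  have A': "A' \<in> carrier_mat n n" unfolding A'_def using W A by auto
  have sym': "transpose_mat A' = A'"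
  proof -
    have tWA: "transpose_mat W * A \<in> carrier_mat n n" using W A by auto
    have "transpose_mat A' = transpose_mat W * transpose_mat (transpose_mat W * A)"
      unfolding A'_def by (rule transpose_mult[OF tWA W])
    also have "transpose_mat (transpose_mat W * A) = transpose_mat A * W"
      using transpose_mult[OF WT A] by simp
    finally show ?thesis unfolding A'_def sym using W A WT
      by (simp add: assoc_mult_mat[OF WT A W])
  qed
  have AW0: "A *\<^sub>v col W 0 = la \<cdot>\<^sub>v col W 0" unfolding cW using A v Av
    by (simp add: mult_mat_vec smult_smult_assoc mult.commute)
  have col0: "i < n \<Longrightarrow> A' $$ (i, 0) = (if i = 0 then la else 0)" for i
  proof -
    assume i: "i < n"
    have "A' $$ (i, 0) = (transpose_mat W * (A * W)) $$ (i, 0)"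
      unfolding A'_def using W A by (simp add: assoc_mult_mat[of _ n n _ n _ n])
    also have "\<dots> = col W i \<bullet> col (A * W) 0" using i n W A by (simp add: index_mult_mat)
    also have "col (A * W) 0 = A *\<^sub>v col W 0" by (rule col_mult2[OF A W], insert n, simp)
    also have "col W i \<bullet> \<dots> = la * (col W i \<bullet> col W 0)" unfolding AW0
      using W i by (simp add: scalar_prod_smult_distrib[of _ n])
    also have "col W i \<bullet> col W 0 = (transpose_mat W * W) $$ (i, 0)" using i n W by (simp add: index_mult_mat)
    also have "\<dots> = (if i = 0 then 1 else 0)" unfolding WW using i n by simp
    finally show ?thesis by simp
  qed
  have row0: "j < n \<Longrightarrow> A' $$ (0, j) = (if j = 0 then la else 0)" for j
  proof -
    assume j: "j < n"
    have "A' $$ (0, j) = transpose_mat A' $$ (j, 0)" using j n A' by simp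
    thus ?thesis unfolding sym' using col0[OF j] by simp
  qed
  define m where "m = n - 1"
  have nm: "n = Suc m" using n unfolding m_def by simp
  define A3 where "A3 = mat m m (\<lambda>(i,j). A' $$ (Suc i, Suc j))"
  have A3: "A3 \<in> carrier_mat m m" unfolding A3_def by simp
  have sym3: "transpose_mat A3 = A3"
  proof (rule eq_matI)
    fix i j assume "i < dim_row A3" "j < dim_col A3"
    hence i: "i < m" and j: "j < m" unfolding A3_def by auto
    have "A' $$ (Suc j, Suc i) = transpose_mat A' $$ (Suc i, Suc j)" using i j A' nm by simp
    thus "transpose_mat A3 $$ (i, j) = A3 $$ (i, j)" using i j unfolding A3_def sym' by simp
  qed (auto simp: A3_def)
  define A1 where "A1 = mat 1 1 (\<lambda>_. la)"
  have A'blk: "A' = four_block_mat A1 (0\<^sub>m 1 m) (0\<^sub>m m 1) A3"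
  proof (rule eq_matI)
    fix i j assume "i < dim_row (four_block_mat A1 (0\<^sub>m 1 m) (0\<^sub>m m 1) A3)"
      "j < dim_col (four_block_mat A1 (0\<^sub>m 1 m) (0\<^sub>m m 1) A3)"
    hence i: "i < n" and j: "j < n" using nm by (auto simp: A1_def A3_def)
    show "A' $$ (i, j) = four_block_mat A1 (0\<^sub>m 1 m) (0\<^sub>m m 1) A3 $$ (i, j)"
    proof (cases "i = 0 \<or> j = 0")
      case True
      then show ?thesis using i j col0 row0 nm by (auto simp: A1_def A3_def)
    next
      case False
      then obtain i' j' where "i = Suc i'" "j = Suc j'" by (metis not0_implies_Suc)
      then show ?thesis using i j nm by (auto simp: A1_def A3_def)
    qed
  qed (insert A' nm, auto simp: A1_def A3_def)
  have e1: "W * (transpose_mat W * A) = A"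
    using assoc_mult_mat[OF W WT A, symmetric] WW2 A by simp
  have "W * A' * transpose_mat W = W * (transpose_mat W * (A * (W * transpose_mat W)))"
    unfolding A'_def using A W WT by (simp add: assoc_mult_mat[of _ n n _ n _ n])
  also have "\<dots> = A" using WW2 A e1 by simp
  finally have e2: "W * A' * transpose_mat W = A" .
  have simw: "similar_mat_wit A A' W (transpose_mat W)"
    unfolding similar_mat_wit_def Let_def using A W WT WW WW2 A' e2 by auto
  have "char_poly A = char_poly A'"
    by (rule char_poly_similar, unfold similar_mat_def, insert simw, blast)
  also have "\<dots> = char_poly A1 * char_poly A3" unfolding A'blk
    by (rule char_poly_four_block_zeros_col, auto simp: A1_def A3)
  also have "char_poly A1 = [:-la, 1:]" unfolding A1_def by (rule char_poly_1x1)
  finally have cpA: "char_poly A = [:-la, 1:] * char_poly A3" .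
  have "Polynomial.order la (char_poly A) = 1 + Polynomial.order la (char_poly A3)"
    unfolding cpA using cp0 cpA
    by (metis (no_types) order_mult order_power_n_n power_one_right)
  hence ord3: "k \<le> Polynomial.order la (char_poly A3)" using ord by simp
  from Suc(1)[OF A3 sym3 ord3] obtain P3 where P3: "P3 \<in> carrier_mat m m" and
    dP3: "det P3 \<noteq> 0" and eP3: "\<forall>c<k. A3 *\<^sub>v col P3 c = la \<cdot>\<^sub>v col P3 c" by blast
  define Bl where "Bl = four_block_mat (1\<^sub>m 1) (0\<^sub>m 1 m) (0\<^sub>m m 1) P3"
  have Bl: "Bl \<in> carrier_mat n n" unfolding Bl_def using P3 nm by auto
  have dBl: "det Bl = det P3" unfolding Bl_def
    by (subst det_four_block_mat_lower_left_zero_col, insert P3, auto)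
  define P where "P = W * Bl"
  have P: "P \<in> carrier_mat n n" unfolding P_def using W Bl by auto
  have "det (transpose_mat W * W) = 1" unfolding WW by simp
  hence "det W * det W = 1" using det_mult[OF WT W] det_transpose[OF W] by simp
  hence dW: "det W \<noteq> 0" by auto
  have dP: "det P \<noteq> 0" unfolding P_def det_mult[OF W Bl] dBl using dW dP3 by simp
  have AW: "A * W = W * A'"
  proof -
    have AWc: "A * W \<in> carrier_mat n n" using A W by auto
    have "W * A' = W * (transpose_mat W * (A * W))" unfolding A'_def using A W WT
      by (simp add: assoc_mult_mat[of _ n n _ n _ n])
    also have "\<dots> = A * W" using assoc_mult_mat[OF W WT AWc, symmetric] WW2 left_mult_one_mat[OF AWc] by simp
    finally show ?thesis by simp
  qed
  have A'Bl: "c < Suc k \<Longrightarrow> c < n \<Longrightarrow> col (A' * Bl) c = la \<cdot>\<^sub>v col Bl c" for c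
  proof (rule eq_vecI)
    fix i assume c: "c < Suc k" "c < n" and i: "i < dim_vec (la \<cdot>\<^sub>v col Bl c)"
    hence i: "i < n" using Bl by simp
    have "A' * Bl = four_block_mat (A1 * 1\<^sub>m 1 + 0\<^sub>m 1 m * 0\<^sub>m m 1) (A1 * 0\<^sub>m 1 m + 0\<^sub>m 1 m * P3)
       (0\<^sub>m m 1 * 1\<^sub>m 1 + A3 * 0\<^sub>m m 1) (0\<^sub>m m 1 * 0\<^sub>m 1 m + A3 * P3)"
      unfolding A'blk Bl_def
      by (rule mult_four_block_mat, insert A3 P3, auto simp: A1_def)
    also have "\<dots> = four_block_mat A1 (0\<^sub>m 1 m) (0\<^sub>m m 1) (A3 * P3)"
      using A3 P3 by (simp add: A1_def)
    finally have prod: "A' * Bl = four_block_mat A1 (0\<^sub>m 1 m) (0\<^sub>m m 1) (A3 * P3)" .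
    have "col (A' * Bl) c $ i = (A' * Bl) $$ (i, c)" using i c A' Bl by simp
    hence e: "col (A' * Bl) c $ i = four_block_mat A1 (0\<^sub>m 1 m) (0\<^sub>m m 1) (A3 * P3) $$ (i, c)"
      unfolding prod .
    show "col (A' * Bl) c $ i = (la \<cdot>\<^sub>v col Bl c) $ i"
    proof (cases "i = 0 \<or> c = 0")
      case True
      then show ?thesis unfolding e using i c nm Bl A3 P3 by (auto simp: A1_def Bl_def)
    next
      case False
      then obtain i' c' where ic: "i = Suc i'" "c = Suc c'" by (metis not0_implies_Suc)
      have "(A3 * P3) $$ (i', c') = col (A3 * P3) c' $ i'" using ic i c nm A3 P3 by simp
      also have "\<dots> = (A3 *\<^sub>v col P3 c') $ i'" by (subst col_mult2[OF A3 P3], insert ic c nm, auto)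
      also have "\<dots> = la * P3 $$ (i', c')" using eP3 ic c i nm P3 by simp
      finally show ?thesis unfolding e using ic i c nm Bl A3 P3 by (auto simp: A1_def Bl_def)
    qed
  qed (insert A' Bl, auto)
  have "\<forall>c<Suc k. A *\<^sub>v col P c = la \<cdot>\<^sub>v col P c"
  proof (intro allI impI)
    fix c assume c: "c < Suc k"
    have cn: "c < n"
    proof (rule ccontr)
      assume "\<not> c < n"
      hence "Suc k > n" using c by simp
      hence "Polynomial.order la (char_poly A) > degree (char_poly A)" using ord degree_monic_char_poly[OF A] by simp
      thus False using order_degree[OF cp0, of la] by simp
    qed
    have "A *\<^sub>v col P c = col (A * P) c" by (rule col_mult2[OF A P cn, symmetric])
    also have "A * P = W * (A' * Bl)" unfolding P_def using A W Bl A'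
      by (simp add: assoc_mult_mat[of _ n n _ n _ n] AW flip: assoc_mult_mat[of A n n W n])
    also have "col \<dots> c = W *\<^sub>v col (A' * Bl) c" by (rule col_mult2[OF W _ cn], insert A' Bl, auto)
    also have "\<dots> = la \<cdot>\<^sub>v (W *\<^sub>v col Bl c)" unfolding A'Bl[OF c cn] using W Bl cn by (simp add: mult_mat_vec)
    also have "W *\<^sub>v col Bl c = col P c" unfolding P_def by (rule col_mult2[OF W Bl cn, symmetric])
    finally show "A *\<^sub>v col P c = la \<cdot>\<^sub>v col P c" .
  qed
  with P dP show ?case by blast
qed


lemma det_dvd_cols:
  fixes M :: "'a::comm_ring_1 mat"
  assumes M: "M \<in> carrier_mat n n" and C: "C \<subseteq> {0..<n}" and R: "finite R"
    and dv: "\<And>r c. r < n \<Longrightarrow> c \<in> C \<Longrightarrow> r \<notin> R \<Longrightarrow> p dvd M $$ (r,c)"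
  shows "p ^ (card C - card R) dvd det M"
proof -
  have "p ^ (card C - card R) dvd signof s * (\<Prod>i = 0..<n. M $$ (i, s i))"
    if s: "s permutes {0..<n}" for s
  proof -
    define T where "T = {i \<in> {0..<n}. s i \<in> C}"
    define S where "S = T - R"
    have "s ` T = C"
    proof
      show "s ` T \<subseteq> C" unfolding T_def by auto
      show "C \<subseteq> s ` T"
      proof
        fix c assume c: "c \<in> C"
        hence "c \<in> {0..<n}" using C by auto
        then obtain i where "i \<in> {0..<n}" "s i = c"
          using permutes_image[OF s] by (metis imageE)
        thus "c \<in> s ` T" using c unfolding T_def by auto
      qed
    qed
    moreover have "inj_on s T" using permutes_inj_on[OF s] .
    ultimately have cT: "card T = card C" by (metis card_image)
    have fT: "finite T" unfolding T_def by auto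
    have "card C - card R \<le> card S" unfolding S_def using cT R
      by (metis diff_card_le_card_Diff)
    hence d1: "p ^ (card C - card R) dvd p ^ card S" by (rule le_imp_power_dvd)
    have SS: "S \<subseteq> {0..<n}" unfolding S_def T_def by auto
    have "p ^ card S = (\<Prod>i\<in>S. p)" by simp
    also have "\<dots> dvd (\<Prod>i\<in>S. M $$ (i, s i))"
      by (rule prod_dvd_prod, rule dv, insert SS, auto simp: S_def T_def)
    also have "\<dots> dvd (\<Prod>i = 0..<n. M $$ (i, s i))"
      by (rule prod_dvd_prod_subset[OF _ SS], simp)
    also have "\<dots> dvd signof s * (\<Prod>i = 0..<n. M $$ (i, s i))" by simp
    finally show ?thesis using d1 dvd_trans by blast
  qed
  thus ?thesis unfolding det_def'[OF M] by (intro dvd_sum) auto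
qed


locale gsetup =
  fixes n :: nat and E :: "nat \<Rightarrow> nat \<Rightarrow> bool" and I J :: "nat set" and \<beta> :: "nat \<Rightarrow> nat"
  assumes IV: "I \<subseteq> {0..<n}" and JV: "J \<subseteq> {0..<n}" and IJ: "I \<inter> J = {}"
    and bij: "bij_betw \<beta> J I"
begin

definition good :: "(nat \<Rightarrow> nat) \<Rightarrow> bool" where
  "good s \<longleftrightarrow> s permutes {0..<n} \<and> (\<forall>j\<in>J. s j = \<beta> j) \<and> (\<forall>r<n. r \<notin> J \<longrightarrow> s r \<noteq> r \<longrightarrow> E r (s r))"

definition kk :: "(nat \<Rightarrow> nat) \<Rightarrow> nat \<Rightarrow> nat" where
  "kk s i = (LEAST k. (s ^^ k) i \<in> J)"

definition ext :: "(nat \<Rightarrow> nat) \<Rightarrow> nat \<Rightarrow> nat list" where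
  "ext s i = map (\<lambda>a. (s ^^ a) i) [0..<Suc (kk s i)]"

lemma finI: "finite I" using IV finite_subset by blast
lemma finJ: "finite J" using JV finite_subset by blast
lemma cardIJ: "card J = card I" using bij_betw_same_card[OF bij] .

context fixes s assumes g: "good s"
begin

lemma perm: "s permutes {0..<n}" using g unfolding good_def by auto
lemma injs: "inj s" using permutes_inj[OF perm] .
lemma sJ: "j \<in> J \<Longrightarrow> s j = \<beta> j" using g unfolding good_def by auto

lemma pred_J: assumes "s y \<in> I" shows "y \<in> J"
proof -
  from bij assms obtain j where j: "j \<in> J" "\<beta> j = s y" 
    by (metis bij_betw_def imageE)
  hence "s j = s y" using sJ by simp
  hence "j = y" using injs by (simp add: inj_eq)
  thus ?thesis using j by simp
qed

lemma inv_back: assumes "i \<in> I" "0 < d" "(s ^^ d) x = i" shows "(s ^^ (d - 1)) x \<in> J"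
proof -
  have "(s ^^ d) x = s ((s ^^ (d - 1)) x)" using assms(2)
    by (metis Suc_diff_1 comp_apply funpow.simps(2))
  thus ?thesis using pred_J assms by simp
qed

lemma ex_J: assumes i: "i \<in> I" shows "\<exists>k. (s ^^ k) i \<in> J"
proof -
  have "permutation s" using perm unfolding permutation_permutes by blast
  from least_power_of_permutation[OF this, of i] have
    "(s ^^ least_power s i) i = i" "least_power s i > 0" by auto
  from inv_back[OF i this(2) this(1)] show ?thesis by blast
qed

lemma kk_J: "i \<in> I \<Longrightarrow> (s ^^ kk s i) i \<in> J"
  unfolding kk_def using ex_J by (rule LeastI_ex)

lemma kk_notJ: "a < kk s i \<Longrightarrow> (s ^^ a) i \<notin> J"
  unfolding kk_def by (rule not_less_Least)

lemma pow_in: "x < n \<Longrightarrow> (s ^^ a) x < n"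
  using permutes_in_image[OF permutes_funpow[OF perm, of a], of x] by simp

lemma dist_pow: assumes i: "i \<in> I" and ac: "a < c" "c \<le> kk s i"
  shows "(s ^^ a) i \<noteq> (s ^^ c) i"
proof
  assume eq: "(s ^^ a) i = (s ^^ c) i"
  have "(s ^^ (c - a)) i = i" using funpow_diff[OF injs, of a c i] eq ac by simp
  from inv_back[OF i _ this] ac have "(s ^^ (c - a - 1)) i \<in> J" by simp
  moreover have "c - a - 1 < kk s i" using ac by simp
  ultimately show False using kk_notJ by blast
qed

lemma disj_pow_aux: assumes i: "i \<in> I" "i' \<in> I" "i \<noteq> i'" and ac: "a \<le> c" "c \<le> kk s i'"
  shows "(s ^^ a) i \<noteq> (s ^^ c) i'"
proof
  assume eq: "(s ^^ a) i = (s ^^ c) i'"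
  have "(s ^^ c) i' = (s ^^ a) ((s ^^ (c - a)) i')" using ac
    by (metis add_diff_inverse_nat comp_apply funpow_add not_le)
  hence "(s ^^ a) i = (s ^^ a) ((s ^^ (c - a)) i')" using eq by simp
  hence ii: "(s ^^ (c - a)) i' = i" using inj_fn[OF injs, of a] by (simp add: inj_eq)
  hence "c - a \<noteq> 0" using i by auto
  from inv_back[OF i(1) _ ii] this have "(s ^^ (c - a - 1)) i' \<in> J" by simp
  moreover have "c - a - 1 < kk s i'" using ac \<open>c - a \<noteq> 0\<close> by simp
  ultimately show False using kk_notJ by blast
qed

lemma disj_pow: assumes i: "i \<in> I" "i' \<in> I" "i \<noteq> i'" and ac: "a \<le> kk s i" "c \<le> kk s i'"
  shows "(s ^^ a) i \<noteq> (s ^^ c) i'"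
proof (cases "a \<le> c")
  case True show ?thesis by (rule disj_pow_aux[OF i True ac(2)])
next
  case False then show ?thesis using disj_pow_aux[of i' i c a] i ac by auto
qed

lemma ext_len: "length (ext s i) = Suc (kk s i)" unfolding ext_def by simp
lemma ext_nth: "a \<le> kk s i \<Longrightarrow> ext s i ! a = (s ^^ a) i" unfolding ext_def
  by (simp del: upt_Suc add: nth_map_upt)
lemma ext_set: "set (ext s i) = {(s ^^ a) i |a. a \<le> kk s i}" unfolding ext_def
  by (auto simp del: upt_Suc simp add: less_Suc_eq_le)

lemma ext_sa: assumes i: "i \<in> I" shows "sa_path n E (ext s i)"
  unfolding sa_path_def
proof (intro conjI allI impI)
  show "ext s i \<noteq> []" unfolding ext_def by simp
  show "distinct (ext s i)" unfolding distinct_conv_nth ext_len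
  proof (intro allI impI)
    fix a c assume "a < Suc (kk s i)" "c < Suc (kk s i)" "a \<noteq> c"
    hence "a \<le> kk s i" "c \<le> kk s i" "a < c \<or> c < a" by auto
    thus "ext s i ! a \<noteq> ext s i ! c" using dist_pow[OF i, of a c] dist_pow[OF i, of c a]
      by (auto simp: ext_nth)
  qed
  show "set (ext s i) \<subseteq> {0..<n}" unfolding ext_set using pow_in i IV by auto
  fix a assume a: "Suc a < length (ext s i)"
  hence a: "a < kk s i" unfolding ext_len by simp
  let ?u = "(s ^^ a) i"
  have u: "?u \<notin> J" using kk_notJ[OF a] .
  have un: "?u < n" using pow_in i IV by auto
  have su: "s ?u = (s ^^ Suc a) i" by simp
  have "s ?u \<noteq> ?u" unfolding su using dist_pow[OF i, of a "Suc a"] a by simp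
  hence "E ?u (s ?u)" using g u un unfolding good_def by auto
  thus "E (ext s i ! a) (ext s i ! Suc a)" using a by (simp add: ext_nth)
qed

lemma ext_hd: "hd (ext s i) = i" unfolding ext_def by (simp add: hd_map del: upt_Suc)
lemma ext_last: "last (ext s i) = (s ^^ kk s i) i" unfolding ext_def by simp

lemma ext_disj: assumes "i \<in> I" "i' \<in> I" "i \<noteq> i'" shows "set (ext s i) \<inter> set (ext s i') = {}"
  unfolding ext_set using disj_pow[OF assms] by blast

lemma ext_pm: "path_matching n E I J (ext s)"
  unfolding path_matching_def
proof (intro conjI ballI impI)
  fix i assume i: "i \<in> I"
  show "sa_path n E (ext s i)" using ext_sa[OF i] .
  show "hd (ext s i) = i" by (rule ext_hd)
next
  fix i i' assume "i \<in> I" "i' \<in> I" "i \<noteq> i'"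
  thus "set (ext s i) \<inter> set (ext s i') = {}" by (rule ext_disj)
next
  have inj: "inj_on (\<lambda>i. last (ext s i)) I"
  proof (rule inj_onI, rule ccontr)
    fix i i' assume "i \<in> I" "i' \<in> I" "last (ext s i) = last (ext s i')" "i \<noteq> i'"
    thus False using ext_disj[of i i'] last_in_set[of "ext s i"] last_in_set[of "ext s i'"]
      by (auto simp: ext_def)
  qed
  have sub: "(\<lambda>i. last (ext s i)) ` I \<subseteq> J" using kk_J by (auto simp: ext_last)
  have "card ((\<lambda>i. last (ext s i)) ` I) = card J" using card_image[OF inj] cardIJ by simp
  hence "(\<lambda>i. last (ext s i)) ` I = J" using card_subset_eq[OF finJ sub] by simp
  with inj show "bij_betw (\<lambda>i. last (ext s i)) I J" unfolding bij_betw_def by simp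
qed

lemma ext_moved: assumes i: "i \<in> I" and x: "x \<in> set (ext s i)" shows "s x \<noteq> x"
proof -
  from x obtain a where a: "a \<le> kk s i" "x = (s ^^ a) i" unfolding ext_set by auto
  show ?thesis
  proof (cases "a < kk s i")
    case True
    have "s x = (s ^^ Suc a) i" using a by simp
    thus ?thesis using dist_pow[OF i, of a "Suc a"] True a by simp
  next
    case False
    hence "x \<in> J" using a kk_J[OF i] by simp
    hence "s x \<in> I" using sJ bij by (auto simp: bij_betw_def)
    thus ?thesis using \<open>x \<in> J\<close> IJ by auto
  qed
qed

lemma ext_U: "(\<Union>i\<in>I. set (ext s i)) \<subseteq> {x. x < n \<and> s x \<noteq> x}"
  using ext_moved ext_sa unfolding sa_path_def by fastforce

end

lemma pm_length_card: assumes "path_matching n E I J P"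
  shows "pm_length I P = card (\<Union>i\<in>I. set (P i))"
proof -
  have "pm_length I P = (\<Sum>i\<in>I. card (set (P i)))" unfolding pm_length_def
    using assms unfolding path_matching_def sa_path_def by (simp add: distinct_card)
  also have "\<dots> = card (\<Union>i\<in>I. set (P i))"
    by (rule card_UN_disjoint[symmetric], insert finI assms, auto simp: path_matching_def)
  finally show ?thesis .
qed

lemma pm_U: assumes "path_matching n E I J P"
  shows "(\<Union>i\<in>I. set (P i)) \<subseteq> {0..<n}"
  using assms unfolding path_matching_def sa_path_def by auto

end


lemma sign_cycle: "distinct cs \<Longrightarrow> sign (cycle_of_list cs) = (-1) ^ (length cs - 1)"
proof (induct cs rule: cycle_of_list.induct)
  case (1 i j cs)
  have e: "cycle_of_list (i # j # cs) = Transposition.transpose i j \<circ> cycle_of_list (j # cs)" by simp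
  have "sign (cycle_of_list (i # j # cs)) = sign (Transposition.transpose i j) * sign (cycle_of_list (j # cs))"
    unfolding e by (rule sign_compose[OF permutation_swap_id permutation_of_cycle])
  also have "\<dots> = - ((-1) ^ (length (j # cs) - 1))" using 1 by (simp add: sign_swap_id)
  finally show ?case by (simp del: cycle_of_list.simps)
qed (auto simp: sign_id)

lemma cycle_nth: assumes "distinct cs" "a < length cs"
  shows "cycle_of_list cs (cs ! a) = cs ! (Suc a mod length cs)"
proof -
  have "map (cycle_of_list cs ^^ 1) cs = rotate 1 cs" by (rule cyclic_rotation[OF assms(1)])
  hence "(map (cycle_of_list cs ^^ 1) cs) ! a = rotate 1 cs ! a" by simp
  thus ?thesis using assms(2) nth_rotate[of a cs 1] by simp
qed

definition cycl :: "(nat \<Rightarrow> nat list) \<Rightarrow> nat list \<Rightarrow> nat \<Rightarrow> nat" where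
  "cycl P xs = foldr (\<lambda>i f. cycle_of_list (P i) \<circ> f) xs id"

lemma cycl_props:
  assumes "distinct xs" "\<forall>i\<in>set xs. distinct (P i)"
    "\<forall>i\<in>set xs. \<forall>i'\<in>set xs. i \<noteq> i' \<longrightarrow> set (P i) \<inter> set (P i') = {}"
  shows "(\<forall>i\<in>set xs. \<forall>x\<in>set (P i). cycl P xs x = cycle_of_list (P i) x)
    \<and> (\<forall>x. x \<notin> (\<Union>i\<in>set xs. set (P i)) \<longrightarrow> cycl P xs x = x)
    \<and> permutation (cycl P xs)
    \<and> sign (cycl P xs) = (\<Prod>i\<in>set xs. (-1) ^ (length (P i) - 1))"
  using assms
proof (induct xs)
  case Nil
  then show ?case by (simp add: cycl_def sign_id permutation_id)
next
  case (Cons i0 xs)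
  have IH: "(\<forall>i\<in>set xs. \<forall>x\<in>set (P i). cycl P xs x = cycle_of_list (P i) x)
    \<and> (\<forall>x. x \<notin> (\<Union>i\<in>set xs. set (P i)) \<longrightarrow> cycl P xs x = x)
    \<and> permutation (cycl P xs)
    \<and> sign (cycl P xs) = (\<Prod>i\<in>set xs. (-1) ^ (length (P i) - 1))"
    using Cons by auto
  have eq: "cycl P (i0 # xs) = cycle_of_list (P i0) \<circ> cycl P xs" unfolding cycl_def by simp
  have i0: "i0 \<notin> set xs" using Cons by auto
  have disj: "i \<in> set xs \<Longrightarrow> set (P i0) \<inter> set (P i) = {}" for i using Cons(4) i0 by auto
  show ?case unfolding eq
  proof (intro conjI allI ballI impI)
    fix i x assume i: "i \<in> set (i0 # xs)" and x: "x \<in> set (P i)"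
    show "(cycle_of_list (P i0) \<circ> cycl P xs) x = cycle_of_list (P i) x"
    proof (cases "i = i0")
      case True
      hence "x \<notin> (\<Union>i\<in>set xs. set (P i))" using disj x by auto
      thus ?thesis using IH True by simp
    next
      case False
      hence iis: "i \<in> set xs" using i by simp
      have "cycl P xs x = cycle_of_list (P i) x" using IH iis x by auto
      moreover have "cycle_of_list (P i) x \<in> set (P i)" using x
        by (metis cycle_permutes permutes_in_image)
      hence "cycle_of_list (P i) x \<notin> set (P i0)" using disj[OF iis] by auto
      ultimately show ?thesis by (simp add: id_outside_supp)
    qed
  next
    fix x assume "x \<notin> (\<Union>i\<in>set (i0 # xs). set (P i))"
    thus "(cycle_of_list (P i0) \<circ> cycl P xs) x = x" using IH by (simp add: id_outside_supp)
  next
    show "permutation (cycle_of_list (P i0) \<circ> cycl P xs)"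
      using IH by (simp add: permutation_compose permutation_of_cycle)
  next
    have "sign (cycle_of_list (P i0) \<circ> cycl P xs) = sign (cycle_of_list (P i0)) * sign (cycl P xs)"
      using IH by (simp add: sign_compose permutation_of_cycle)
    also have "sign (cycle_of_list (P i0)) = (-1) ^ (length (P i0) - 1)"
      using Cons by (simp add: sign_cycle)
    finally have s1: "sign (cycle_of_list (P i0) \<circ> cycl P xs) = (-1) ^ (length (P i0) - 1) * sign (cycl P xs)" .
    have s2: "(\<Prod>i\<in>set (i0 # xs). (-1::int) ^ (length (P i) - 1)) = (-1) ^ (length (P i0) - 1) * (\<Prod>i\<in>set xs. (-1) ^ (length (P i) - 1))"
      using i0 by simp
    show "sign (cycle_of_list (P i0) \<circ> cycl P xs) = (\<Prod>i\<in>set (i0 # xs). (-1) ^ (length (P i) - 1))"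
      unfolding s1 s2 using IH by simp
  qed
qed


locale gsetup2 = gsetup +
  fixes P0 :: "nat \<Rightarrow> nat list"
  assumes irr: "\<forall>v<n. \<not> E v v"
   and P0pm: "path_matching n E I J P0"
   and P0min: "\<forall>Q. path_matching n E I J Q \<longrightarrow> pm_length I P0 \<le> pm_length I Q"
   and uniq: "\<forall>Q. path_matching n E I J Q \<longrightarrow> pm_length I Q = pm_length I P0 \<longrightarrow> (\<forall>i\<in>I. \<beta> (last (Q i)) = i)"
begin

definition "ilist = sorted_list_of_set I"
definition "cyc Q = cycl Q ilist"
definition "lz = n - pm_length I P0"

lemma ilist_props: "distinct ilist" "set ilist = I" by (simp_all add: ilist_def finI)

lemma len2: assumes Q: "path_matching n E I J Q" and i: "i \<in> I" shows "2 \<le> length (Q i)"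
proof -
  have ne: "Q i \<noteq> []" and hd: "hd (Q i) = i" using Q i unfolding path_matching_def sa_path_def by auto
  have "last (Q i) \<in> J" using Q i unfolding path_matching_def bij_betw_def by auto
  hence "hd (Q i) \<noteq> last (Q i)" using hd i IJ by auto
  with ne show ?thesis by (cases "Q i"; cases "tl (Q i)") auto
qed

lemma cyc_facts: assumes Q: "path_matching n E I J Q"
  shows "\<forall>i\<in>I. \<forall>a<length (Q i). cyc Q (Q i ! a) = Q i ! (Suc a mod length (Q i))"
    "\<forall>x. x \<notin> (\<Union>i\<in>I. set (Q i)) \<longrightarrow> cyc Q x = x"
    "cyc Q permutes {0..<n}"
    "sign (cyc Q) = (-1) ^ (pm_length I Q - card I)"
proof -
  have dist: "\<forall>i\<in>set ilist. distinct (Q i)" using Q ilist_props unfolding path_matching_def sa_path_def by auto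
  have disj: "\<forall>i\<in>set ilist. \<forall>i'\<in>set ilist. i \<noteq> i' \<longrightarrow> set (Q i) \<inter> set (Q i') = {}"
    using Q ilist_props unfolding path_matching_def by auto
  note cp = cycl_props[OF ilist_props(1) dist disj, unfolded ilist_props(2), folded cyc_def]
  show "\<forall>i\<in>I. \<forall>a<length (Q i). cyc Q (Q i ! a) = Q i ! (Suc a mod length (Q i))"
  proof (intro ballI allI impI)
    fix i a assume i: "i \<in> I" and a: "a < length (Q i)"
    have "cyc Q (Q i ! a) = cycle_of_list (Q i) (Q i ! a)" using cp i a by auto
    also have "\<dots> = Q i ! (Suc a mod length (Q i))" using cycle_nth[OF _ a] dist ilist_props i by auto
    finally show "cyc Q (Q i ! a) = Q i ! (Suc a mod length (Q i))" .
  qed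
  show out: "\<forall>x. x \<notin> (\<Union>i\<in>I. set (Q i)) \<longrightarrow> cyc Q x = x" using cp by blast
  have "bij (cyc Q)" using cp permutation_bijective by blast
  moreover have "\<forall>x. x \<notin> {0..<n} \<longrightarrow> cyc Q x = x" using out pm_U[OF Q] by blast
  ultimately show "cyc Q permutes {0..<n}" unfolding permutes_def bij_iff by blast
  have "sign (cyc Q) = (\<Prod>i\<in>I. (-1) ^ (length (Q i) - 1))" using cp by simp
  also have "\<dots> = (-1) ^ (\<Sum>i\<in>I. length (Q i) - 1)" by (simp add: power_sum)
  also have "(\<Sum>i\<in>I. length (Q i) - 1) = pm_length I Q - card I"
  proof -
    have "(\<Sum>i\<in>I. length (Q i) - 1) = (\<Sum>i\<in>I. length (Q i)) - (\<Sum>i\<in>I. 1)"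
      by (rule sum_subtractf_nat, insert len2[OF Q], force)
    thus ?thesis unfolding pm_length_def by simp
  qed
  finally show "sign (cyc Q) = (-1) ^ (pm_length I Q - card I)" .
qed

lemma cyc_moves: assumes Q: "path_matching n E I J Q" and x: "x \<in> (\<Union>i\<in>I. set (Q i))"
  shows "cyc Q x \<noteq> x"
proof -
  from x obtain i a where i: "i \<in> I" and a: "a < length (Q i)" and xa: "x = Q i ! a"
    by (auto simp: in_set_conv_nth)
  have d: "distinct (Q i)" using Q i unfolding path_matching_def sa_path_def by auto
  have l2: "2 \<le> length (Q i)" using len2[OF Q i] .
  have ne: "Suc a mod length (Q i) \<noteq> a"
  proof (cases "Suc a < length (Q i)")
    case True then show ?thesis by simp
  next
    case False
    hence "Suc a = length (Q i)" using a by simp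
    thus ?thesis using l2 by auto
  qed
  have "cyc Q x = Q i ! (Suc a mod length (Q i))" using cyc_facts(1)[OF Q] i a xa by auto
  also have "\<dots> \<noteq> x"
  proof -
    have "Suc a mod length (Q i) < length (Q i)" using mod_less_divisor[of "length (Q i)" "Suc a"] l2 by linarith
    thus ?thesis unfolding xa using ne d a by (simp add: nth_eq_iff_index_eq)
  qed
  finally show ?thesis .
qed

lemma pm0_le: "pm_length I P0 \<le> n"
  using pm_length_card[OF P0pm] card_mono[OF _ pm_U[OF P0pm]] by simp

lemma card_split: "card {r\<in>{0..<n}. s r = r} + card {r\<in>{0..<n}. s r \<noteq> r} = n"
proof -
  have "card {r\<in>{0..<n}. s r = r} + card {r\<in>{0..<n}. s r \<noteq> r} = card ({r\<in>{0..<n}. s r = r} \<union> {r\<in>{0..<n}. s r \<noteq> r})"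
    by (rule card_Un_disjoint[symmetric], auto)
  also have "{r\<in>{0..<n}. s r = r} \<union> {r\<in>{0..<n}. s r \<noteq> r} = {0..<n}" by auto
  finally show ?thesis by simp
qed

lemma fix_le: assumes g: "good s" shows "card {r\<in>{0..<n}. s r = r} \<le> lz"
proof -
  have "(\<Union>i\<in>I. set (ext s i)) \<subseteq> {r\<in>{0..<n}. s r \<noteq> r}" using ext_U[OF g] by auto
  hence "pm_length I (ext s) \<le> card {r\<in>{0..<n}. s r \<noteq> r}"
    unfolding pm_length_card[OF ext_pm[OF g]] by (intro card_mono, auto)
  moreover have "pm_length I P0 \<le> pm_length I (ext s)" using P0min ext_pm[OF g] by auto
  ultimately show ?thesis using card_split[of s] unfolding lz_def by linarith
qed

lemma T_sign: assumes g: "good s" and fx: "card {r\<in>{0..<n}. s r = r} = lz"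
  shows "sign s = (-1) ^ card {r\<in>{0..<n}. r \<notin> J \<and> s r \<noteq> r}"
proof -
  let ?NF = "{r\<in>{0..<n}. s r \<noteq> r}"
  let ?U = "\<Union>i\<in>I. set (ext s i)"
  let ?Q = "ext s"
  have Q: "path_matching n E I J ?Q" by (rule ext_pm[OF g])
  have sub: "?U \<subseteq> ?NF" using ext_U[OF g] by auto
  have fNF: "finite ?NF" by auto
  have c1: "pm_length I ?Q \<le> card ?NF"
    unfolding pm_length_card[OF Q] using sub by (intro card_mono, auto)
  moreover have c2: "pm_length I P0 \<le> pm_length I ?Q" using P0min Q by auto
  moreover have "card ?NF = pm_length I P0" using card_split[of s] fx pm0_le unfolding lz_def by linarith
  ultimately have eqQ: "pm_length I ?Q = pm_length I P0" and cU: "card ?U = card ?NF"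
    using pm_length_card[OF Q] by auto
  have UNF: "?U = ?NF" using card_subset_eq[OF fNF sub cU] .
  have bk: "\<forall>i\<in>I. \<beta> (last (?Q i)) = i" using uniq Q eqQ by blast
  have scyc: "s = cyc ?Q"
  proof
    fix x
    show "s x = cyc ?Q x"
    proof (cases "x \<in> ?U")
      case True
      then obtain i where i: "i \<in> I" and x: "x \<in> set (ext s i)" by auto
      then obtain a where a: "a \<le> kk s i" and xa: "x = (s ^^ a) i" unfolding ext_set[OF g] by auto
      have ln: "length (?Q i) = Suc (kk s i)" by (rule ext_len[OF g])
      have x2: "x = ?Q i ! a" using ext_nth[OF g a] xa by simp
      have c: "cyc ?Q x = ?Q i ! (Suc a mod Suc (kk s i))"
        using cyc_facts(1)[OF Q] i a ln x2 by (metis le_imp_less_Suc)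
      show ?thesis
      proof (cases "a < kk s i")
        case True
        hence "cyc ?Q x = ?Q i ! Suc a" using c by simp
        also have "\<dots> = (s ^^ Suc a) i" using ext_nth[OF g] True by simp
        also have "\<dots> = s x" using xa by simp
        finally show ?thesis by simp
      next
        case False
        hence ak: "a = kk s i" using a by simp
        hence "cyc ?Q x = ?Q i ! 0" using c by simp
        also have "\<dots> = i" using ext_nth[OF g, of 0 i] by simp
        finally have cx: "cyc ?Q x = i" .
        have xJ: "x \<in> J" using kk_J[OF g i] xa ak by simp
        have xl: "x = last (?Q i)" using ext_last[OF g] xa ak by simp
        have "s x = \<beta> x" using sJ[OF g xJ] .
        also have "\<dots> = i" using xl bk i by simp
        finally show ?thesis using cx by simp
      qed
    next
      case False
      hence "cyc ?Q x = x" using cyc_facts(2)[OF Q] by blast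
      moreover have "s x = x"
      proof (cases "x < n")
        case True then show ?thesis using False UNF by auto
      next
        case False then show ?thesis using perm[OF g] unfolding permutes_def by auto
      qed
      ultimately show ?thesis by simp
    qed
  qed
  have "sign s = (-1) ^ (pm_length I ?Q - card I)" using cyc_facts(4)[OF Q] scyc by simp
  also have "pm_length I ?Q - card I = card {r\<in>{0..<n}. r \<notin> J \<and> s r \<noteq> r}"
  proof -
    have JNF: "J \<subseteq> ?NF"
    proof
      fix j assume j: "j \<in> J"
      have "s j = \<beta> j" using sJ[OF g j] .
      hence "s j \<in> I" using bij j by (auto simp: bij_betw_def)
      thus "j \<in> ?NF" using j JV IJ by auto
    qed
    have "{r\<in>{0..<n}. r \<notin> J \<and> s r \<noteq> r} = ?NF - J" by auto
    hence "card {r\<in>{0..<n}. r \<notin> J \<and> s r \<noteq> r} = card ?NF - card J"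
      using card_Diff_subset[OF finJ JNF] by simp
    thus ?thesis using cU pm_length_card[OF Q] cardIJ by simp
  qed
  finally show ?thesis .
qed

lemma cyc0_good: "good (cyc P0)" "card {r\<in>{0..<n}. cyc P0 r = r} = lz"
proof -
  let ?s = "cyc P0"
  let ?U = "\<Union>i\<in>I. set (P0 i)"
  note cf = cyc_facts[OF P0pm]
  have bk: "\<forall>i\<in>I. \<beta> (last (P0 i)) = i" using uniq P0pm by blast
  have bl: "bij_betw (\<lambda>i. last (P0 i)) I J" using P0pm unfolding path_matching_def by auto
  show "good ?s" unfolding good_def
  proof (intro conjI ballI allI impI)
    show "?s permutes {0..<n}" using cf(3) .
  next
    fix j assume j: "j \<in> J"
    then obtain i where i: "i \<in> I" and jl: "j = last (P0 i)" using bl by (auto simp: bij_betw_def)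
    have ne: "P0 i \<noteq> []" using P0pm i unfolding path_matching_def sa_path_def by auto
    let ?L = "length (P0 i)"
    have "j = P0 i ! (?L - 1)" using jl ne by (simp add: last_conv_nth)
    hence "?s j = P0 i ! (Suc (?L - 1) mod ?L)" using cf(1) i ne by simp
    also have "Suc (?L - 1) mod ?L = 0" using ne by simp
    also have "P0 i ! 0 = i" using P0pm i ne hd_conv_nth[OF ne] unfolding path_matching_def sa_path_def by simp
    finally show "?s j = \<beta> j" using bk i jl by simp
  next
    fix r assume r: "r < n" "r \<notin> J" "?s r \<noteq> r"
    hence "r \<in> ?U" using cf(2) by blast
    then obtain i a where i: "i \<in> I" and a: "a < length (P0 i)" and ra: "r = P0 i ! a"
      by (auto simp: in_set_conv_nth)
    have sa: "sa_path n E (P0 i)" using P0pm i unfolding path_matching_def by auto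
    have "Suc a < length (P0 i)"
    proof (rule ccontr)
      assume "\<not> Suc a < length (P0 i)"
      hence "a = length (P0 i) - 1" using a by simp
      moreover have "P0 i \<noteq> []" using a by auto
      ultimately have "r = last (P0 i)" using ra by (simp add: last_conv_nth)
      hence "r \<in> J" using bl i by (auto simp: bij_betw_def)
      thus False using r by simp
    qed
    hence "?s r = P0 i ! Suc a" using cf(1) i a ra by simp
    thus "E r (?s r)" using sa \<open>Suc a < length (P0 i)\<close> ra unfolding sa_path_def by auto
  qed
  have "{r\<in>{0..<n}. ?s r = r} = {0..<n} - ?U" using cyc_moves[OF P0pm] cf(2) by blast
  hence "card {r\<in>{0..<n}. ?s r = r} = n - card ?U" using card_Diff_subset[OF _ pm_U[OF P0pm]]
    by (simp add: finite_subset[OF pm_U[OF P0pm]])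
  thus "card {r\<in>{0..<n}. ?s r = r} = lz" unfolding lz_def pm_length_card[OF P0pm] .
qed

end


lemma monom_prod: "finite A \<Longrightarrow> (\<Prod>r\<in>A. monom (f r) (g r)) = monom (\<Prod>r\<in>A. f r) (\<Sum>r\<in>A. g r)"
  by (induct A rule: finite_induct) (auto simp: mult_monom)

lemma prod_if_pow: "finite A \<Longrightarrow> (\<Prod>r\<in>A. if P r then c else 1) = c ^ card {r\<in>A. P r}"
proof (induct A rule: finite_induct)
  case (insert x F)
  have "{r \<in> insert x F. P r} = (if P x then insert x {r\<in>F. P r} else {r\<in>F. P r})" by auto
  thus ?case using insert by auto
qed simp

lemma sum_if_card: "finite A \<Longrightarrow> (\<Sum>r\<in>A. if P r then 1 else 0 :: nat) = card {r\<in>A. P r}"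
proof (induct A rule: finite_induct)
  case (insert x F)
  have "{r \<in> insert x F. P r} = (if P x then insert x {r\<in>F. P r} else {r\<in>F. P r})" by auto
  thus ?case using insert by auto
qed simp

lemma sum_if_card_real: "finite A \<Longrightarrow> (\<Sum>r\<in>A. if P r then 1 else 0 :: real) = of_nat (card {r\<in>A. P r})"
proof (induct A rule: finite_induct)
  case (insert x F)
  have "{r \<in> insert x F. P r} = (if P x then insert x {r\<in>F. P r} else {r\<in>F. P r})" by auto
  thus ?case using insert by auto
qed simp

context gsetup2
begin

definition Nm :: "real poly mat" where
  "Nm = mat n n (\<lambda>(r,c). if r \<in> J then (if c = \<beta> r then 1 else 0)
      else (if r = c then [:0,1:] else 0) - [:(if E r c then 1 else 0):])"

lemma Nm_carrier: "Nm \<in> carrier_mat n n" unfolding Nm_def by simp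

lemma term_eq: assumes s: "s permutes {0..<n}"
  shows "(\<Prod>r = 0..<n. Nm $$ (r, s r)) = (if good s then
     monom ((-1) ^ card {r\<in>{0..<n}. r \<notin> J \<and> s r \<noteq> r}) (card {r\<in>{0..<n}. s r = r}) else 0)"
proof -
  have sr: "r < n \<Longrightarrow> s r < n" for r using permutes_in_image[OF s] by simp
  have ent: "r < n \<Longrightarrow> Nm $$ (r, s r) = (if r \<in> J then (if s r = \<beta> r then 1 else 0)
      else (if r = s r then [:0,1:] else 0) - [:(if E r (s r) then 1 else 0):])" for r
    unfolding Nm_def using sr by simp
  show ?thesis
  proof (cases "good s")
    case False
    have "\<exists>r<n. Nm $$ (r, s r) = 0"
    proof (cases "\<forall>j\<in>J. s j = \<beta> j")
      case True
      with False s obtain r where r: "r < n" "r \<notin> J" "s r \<noteq> r" "\<not> E r (s r)"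
        unfolding good_def by auto
      show ?thesis using ent[OF r(1)] r by (intro exI[of _ r]) auto
    next
      case False
      then obtain j where j: "j \<in> J" "s j \<noteq> \<beta> j" by auto
      have "j < n" using j JV by auto
      thus ?thesis using ent[OF \<open>j < n\<close>] j by (intro exI[of _ j]) auto
    qed
    then obtain r where r: "r < n" and z: "Nm $$ (r, s r) = 0" by blast
    hence "(\<Prod>r = 0..<n. Nm $$ (r, s r)) = 0" by (intro prod_zero) auto
    thus ?thesis using False by simp
  next
    case True
    let ?f = "\<lambda>r. if r \<notin> J \<and> s r \<noteq> r then -1 else (1::real)"
    let ?g = "\<lambda>r. if s r = r then 1 else (0::nat)"
    have "(\<Prod>r = 0..<n. Nm $$ (r, s r)) = (\<Prod>r = 0..<n. monom (?f r) (?g r))"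
    proof (rule prod.cong[OF refl])
      fix r assume r: "r \<in> {0..<n}"
      hence r: "r < n" by simp
      show "Nm $$ (r, s r) = monom (?f r) (?g r)"
      proof (cases "r \<in> J")
        case rJ: True
        hence "s r = \<beta> r" using sJ[OF True] by simp
        moreover have "\<beta> r \<in> I" using bij rJ by (auto simp: bij_betw_def)
        ultimately have "s r \<noteq> r" using rJ IJ by auto
        thus ?thesis using ent[OF r] rJ \<open>s r = \<beta> r\<close> by (simp add: one_pCons)
      next
        case rJ: False
        show ?thesis
        proof (cases "s r = r")
          case True
          thus ?thesis using ent[OF r] rJ irr r by (simp add: monom_Suc)
        next
          case False
          hence "E r (s r)" using \<open>good s\<close> rJ r unfolding good_def by auto
          thus ?thesis using ent[OF r] rJ False by (simp add: minus_pCons monom_0)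
        qed
      qed
    qed
    also have "\<dots> = monom (\<Prod>r = 0..<n. ?f r) (\<Sum>r = 0..<n. ?g r)" by (rule monom_prod, simp)
    also have "(\<Prod>r = 0..<n. ?f r) = (-1) ^ card {r\<in>{0..<n}. r \<notin> J \<and> s r \<noteq> r}"
      by (rule prod_if_pow, simp)
    also have "(\<Sum>r = 0..<n. ?g r) = card {r\<in>{0..<n}. s r = r}"
      by (rule sum_if_card, simp)
    finally show ?thesis using True by simp
  qed
qed

lemma coeff_det: "coeff (det Nm) k = (\<Sum>s\<in>{s. s permutes {0..<n}}.
   if good s \<and> card {r\<in>{0..<n}. s r = r} = k
   then of_int (sign s) * (-1) ^ card {r\<in>{0..<n}. r \<notin> J \<and> s r \<noteq> r} else 0)"
  unfolding det_def'[OF Nm_carrier] coeff_sum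
proof (rule sum.cong[OF refl])
  fix s assume "s \<in> {s. s permutes {0..<n}}"
  hence s: "s permutes {0..<n}" by simp
  show "coeff (signof s * (\<Prod>i = 0..<n. Nm $$ (i, s i))) k = (if good s \<and> card {r\<in>{0..<n}. s r = r} = k
   then of_int (sign s) * (-1) ^ card {r\<in>{0..<n}. r \<notin> J \<and> s r \<noteq> r} else 0)"
    unfolding term_eq[OF s] by (simp add: of_int_poly coeff_monom)
qed

lemma detNm: "degree (det Nm) \<le> lz" "det Nm \<noteq> 0"
proof -
  show "degree (det Nm) \<le> lz"
  proof (rule degree_le, intro allI impI)
    fix k assume k: "lz < k"
    show "coeff (det Nm) k = 0" unfolding coeff_det
      by (rule sum.neutral, insert k fix_le, force)
  qed
  have "coeff (det Nm) lz = (\<Sum>s\<in>{s. s permutes {0..<n}}. if good s \<and> card {r\<in>{0..<n}. s r = r} = lz then 1 else 0)"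
    unfolding coeff_det
  proof (rule sum.cong[OF refl])
    fix s
    show "(if good s \<and> card {r\<in>{0..<n}. s r = r} = lz
      then of_int (sign s) * (-1) ^ card {r\<in>{0..<n}. r \<notin> J \<and> s r \<noteq> r} else 0) =
      (if good s \<and> card {r\<in>{0..<n}. s r = r} = lz then 1 else (0::real))"
    proof (cases "good s \<and> card {r\<in>{0..<n}. s r = r} = lz")
      case True
      hence "sign s = (-1) ^ card {r\<in>{0..<n}. r \<notin> J \<and> s r \<noteq> r}" using T_sign by blast
      hence "(of_int (sign s) :: real) = (-1) ^ card {r\<in>{0..<n}. r \<notin> J \<and> s r \<noteq> r}" by simp
      hence "(of_int (sign s) :: real) * (-1) ^ card {r\<in>{0..<n}. r \<notin> J \<and> s r \<noteq> r} = 1"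
        by (simp flip: power_mult_distrib)
      thus ?thesis using True by simp
    qed auto
  qed
  also have "\<dots> = of_nat (card {s\<in>{s. s permutes {0..<n}}. good s \<and> card {r\<in>{0..<n}. s r = r} = lz})"
    by (rule sum_if_card_real, rule finite_permutations, simp)
  also have "\<dots> \<noteq> 0"
  proof -
    have fin: "finite {s. s permutes {0..<n}}" by (rule finite_permutations, simp)
    have "cyc P0 \<in> {s\<in>{s. s permutes {0..<n}}. good s \<and> card {r\<in>{0..<n}. s r = r} = lz}"
      using cyc0_good perm by auto
    hence "card {s\<in>{s. s permutes {0..<n}}. good s \<and> card {r\<in>{0..<n}. s r = r} = lz} \<noteq> 0"
      using fin by auto
    thus ?thesis by simp
  qed
  finally show "det Nm \<noteq> 0" by auto
qed

end


lemma sum_order_le: "finite S \<Longrightarrow> f \<noteq> 0 \<Longrightarrow> (\<Sum>a\<in>S. Polynomial.order a f) \<le> degree (f::real poly)"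
proof (induct S arbitrary: f rule: finite_induct)
  case empty then show ?case by simp
next
  case (insert a S f)
  obtain q where fq: "f = [:-a,1:] ^ Polynomial.order a f * q" and nd: "\<not> [:-a,1:] dvd q"
    using order_decomp[OF insert(4)] by blast
  have q0: "q \<noteq> 0" using nd by auto
  have pw0: "[:-a,1:] ^ Polynomial.order a f \<noteq> 0" by simp
  have ob: "Polynomial.order x f = Polynomial.order x q" if x: "x \<in> S" for x
  proof -
    have xa: "x \<noteq> a" using x insert(2) by auto
    have "Polynomial.order x f = Polynomial.order x ([:-a,1:] ^ Polynomial.order a f) + Polynomial.order x q"
      using order_mult[of "[:-a,1:] ^ Polynomial.order a f" q x] fq insert(4) by simp
    moreover have "Polynomial.order x ([:-a,1:] ^ Polynomial.order a f) = 0"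
      by (rule order_0I, insert xa, simp)
    ultimately show ?thesis by simp
  qed
  have "(\<Sum>x\<in>insert a S. Polynomial.order x f) = Polynomial.order a f + (\<Sum>x\<in>S. Polynomial.order x q)"
    using insert(1,2) ob by simp
  also have "\<dots> \<le> Polynomial.order a f + degree q" using insert(3)[OF q0] by simp
  also have "\<dots> = degree f"
    using fq degree_mult_eq[OF pw0 q0] degree_linear_power[of "-a"] by simp
  finally show ?case .
qed

lemma adj_carrier: "adjacency_matrix n E \<in> carrier_mat n n" unfolding adjacency_matrix_def by simp

lemma adj_sym: assumes "simple_graph n E" shows "transpose_mat (adjacency_matrix n E) = adjacency_matrix n E"
  using assms unfolding adjacency_matrix_def simple_graph_def by (intro eq_matI) auto

lemma const_sum: "(\<Sum>k\<in>K. [:f k:]) = [:(\<Sum>k\<in>K. f k) :: real:]"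
  using monom_sum[of f K 0] by (simp add: monom_0)

context gsetup2
begin

lemma eig_dvd:
  assumes sym: "transpose_mat (adjacency_matrix n E) = adjacency_matrix n E"
  shows "[:-la,1:] ^ (Polynomial.order la (char_poly (adjacency_matrix n E)) - card J) dvd det Nm"
proof -
  define A where "A = adjacency_matrix n E"
  define m where "m = Polynomial.order la (char_poly A)"
  have A: "A \<in> carrier_mat n n" unfolding A_def by (rule adj_carrier)
  have Aent: "r < n \<Longrightarrow> k < n \<Longrightarrow> A $$ (r, k) = (if E r k then 1 else 0)" for r k
    unfolding A_def adjacency_matrix_def by simp
  from sym_eig_cols[OF A sym[folded A_def], of m la] obtain P where P: "P \<in> carrier_mat n n"
    and dP: "det P \<noteq> 0" and eP: "\<forall>c<m. A *\<^sub>v col P c = la \<cdot>\<^sub>v col P c" unfolding m_def by auto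
  have cp0: "char_poly A \<noteq> 0" using degree_monic_char_poly[OF A] by auto
  have mn: "m \<le> n" unfolding m_def using order_degree[OF cp0, of la] degree_monic_char_poly[OF A] by simp
  interpret h: comm_ring_hom "\<lambda>a::real. [:a:]" by (unfold_locales, auto simp: one_pCons)
  define P' where "P' = map_mat (\<lambda>a. [:a:]) P"
  have P': "P' \<in> carrier_mat n n" unfolding P'_def using P by simp
  define M where "M = Nm * P'"
  have M: "M \<in> carrier_mat n n" unfolding M_def using Nm_carrier P' by simp
  have ent: "[:-la,1:] dvd M $$ (r, c)" if r: "r < n" and c: "c \<in> {0..<m}" and rJ: "r \<notin> J" for r c
  proof -
    have cn: "c < n" using c mn by simp
    have "M $$ (r, c) = (\<Sum>k = 0..<n. Nm $$ (r, k) * [:P $$ (k, c):])"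
      unfolding M_def using r cn Nm_carrier P' P
      by (simp add: index_mult_mat scalar_prod_def P'_def)
    also have "\<dots> = (\<Sum>k = 0..<n. (if r = k then [:0,1:] * [:P $$ (k, c):] else 0) - [:A $$ (r, k) * P $$ (k, c):])"
      by (rule sum.cong[OF refl], insert r rJ, auto simp: Nm_def Aent algebra_simps)
    also have "\<dots> = [:0,1:] * [:P $$ (r, c):] - [:(\<Sum>k = 0..<n. A $$ (r, k) * P $$ (k, c)):]"
      using r by (simp add: sum_subtractf const_sum)
    also have "(\<Sum>k = 0..<n. A $$ (r, k) * P $$ (k, c)) = (A *\<^sub>v col P c) $ r"
      using A P r cn by (simp add: scalar_prod_def)
    also have "\<dots> = la * P $$ (r, c)" using eP c r cn P by simp
    also have "[:0,1:] * [:P $$ (r, c):] - [:la * P $$ (r, c):] = [:-la,1:] * [:P $$ (r, c):]"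
      by simp
    finally have eq: "M $$ (r, c) = [:-la,1:] * [:P $$ (r, c):]" .
    show ?thesis unfolding eq by (rule dvd_triv_left)
  qed
  have "[:-la,1:] ^ (card {0..<m} - card J) dvd det M"
    by (rule det_dvd_cols[OF M _ finJ], insert mn ent, auto)
  moreover have "det M = det Nm * det P'" unfolding M_def by (rule det_mult[OF Nm_carrier P'])
  moreover have "det P' = [:det P:]" unfolding P'_def by (rule h.hom_det)
  ultimately have d: "[:-la,1:] ^ (m - card J) dvd det Nm * [:det P:]" by simp
  have "is_unit [:det P:]" using dP by (rule is_unit_triv)
  hence "[:-la,1:] ^ (m - card J) dvd det Nm" using d dvd_mult_unit_iff by blast
  thus ?thesis unfolding m_def A_def .
qed

end


theorem theorem3p1:
  fixes n b :: nat and E :: "nat \<Rightarrow> nat \<Rightarrow> bool" and I J :: "nat set" and l :: int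
  assumes "simple_graph n E"
    and "I \<subseteq> {0..<n}" and "J \<subseteq> {0..<n}" and "I \<inter> J = {}"
    and "card I = b" and "card J = b"
    and "\<exists>P. path_matching n E I J P"
    and "\<forall>P Q. min_path_matching n E I J P \<and> min_path_matching n E I J Q
            \<longrightarrow> (\<forall>i\<in>I. matching_map P i = matching_map Q i)"
    and "\<forall>P. min_path_matching n E I J P \<longrightarrow> int (pm_length I P) = int n - l"
  shows "int (\<Sum>x\<in>{x. eigenvalue (adjacency_matrix n E) x}.
             eig_mult (adjacency_matrix n E) x - b) \<le> l
    \<and> (\<forall>S. S \<subseteq> {x. eigenvalue (adjacency_matrix n E) x} \<and> S \<noteq> {} \<longrightarrow>
          int (\<Sum>x\<in>S. eig_mult (adjacency_matrix n E) x) \<le> int (card S * b) + l)"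
proof -
  let ?A = "adjacency_matrix n E"
  let ?Eig = "{x. eigenvalue ?A x}"
  from assms(7) obtain P where "path_matching n E I J P" by blast
  from ex_has_least_nat[of "path_matching n E I J" P "pm_length I", OF this] obtain P0 where
    P0pm: "path_matching n E I J P0" and
    P0min: "\<forall>Q. path_matching n E I J Q \<longrightarrow> pm_length I P0 \<le> pm_length I Q" by blast
  have P0m: "min_path_matching n E I J P0" unfolding min_path_matching_def using P0pm P0min by blast
  define \<mu> where "\<mu> = (\<lambda>i. last (P0 i))"
  have b\<mu>: "bij_betw \<mu> I J" using P0pm unfolding path_matching_def \<mu>_def by auto
  define \<beta> where "\<beta> = the_inv_into I \<mu>"
  have b\<beta>: "bij_betw \<beta> J I" unfolding \<beta>_def by (rule bij_betw_the_inv_into[OF b\<mu>])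
  have uniq: "\<forall>Q. path_matching n E I J Q \<longrightarrow> pm_length I Q = pm_length I P0 \<longrightarrow> (\<forall>i\<in>I. \<beta> (last (Q i)) = i)"
  proof (intro allI impI ballI)
    fix Q i assume Q: "path_matching n E I J Q" "pm_length I Q = pm_length I P0" and i: "i \<in> I"
    have "min_path_matching n E I J Q" unfolding min_path_matching_def using Q P0min by auto
    hence "matching_map P0 i = matching_map Q i" using assms(8) P0m i by blast
    hence "last (Q i) = \<mu> i" unfolding matching_map_def \<mu>_def by simp
    thus "\<beta> (last (Q i)) = i" unfolding \<beta>_def
      using the_inv_into_f_f[OF bij_betw_imp_inj_on[OF b\<mu>] i] by simp
  qed
  have irr: "\<forall>v<n. \<not> E v v" using assms(1) unfolding simple_graph_def by auto
  interpret G: gsetup2 n E I J \<beta> P0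
    by (unfold_locales, insert assms(2-4) b\<beta> irr P0pm P0min uniq, auto)
  have "int (pm_length I P0) = int n - l" using assms(9) P0m by blast
  hence lz: "int G.lz = l" using G.pm0_le unfolding G.lz_def by simp
  define f where "f = det G.Nm"
  have f0: "f \<noteq> 0" and degf: "degree f \<le> G.lz" using G.detNm unfolding f_def by auto
  have cp0: "char_poly ?A \<noteq> 0"
  proof
    assume "char_poly ?A = 0"
    with degree_monic_char_poly[OF adj_carrier[of n E]] show False by simp
  qed
  have Eig: "?Eig = {x. poly (char_poly ?A) x = 0}"
    using eigenvalue_root_char_poly[OF adj_carrier] by auto
  have finE: "finite ?Eig" unfolding Eig by (rule poly_roots_finite[OF cp0])
  have le1: "eig_mult ?A x - b \<le> Polynomial.order x f" if "x \<in> ?Eig" for x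
    using G.eig_dvd[OF adj_sym[OF assms(1)], of x] assms(6) f0
    unfolding f_def eig_mult_def by (simp add: order_divides)
  have main: "(\<Sum>x\<in>?Eig. eig_mult ?A x - b) \<le> G.lz"
  proof -
    have "(\<Sum>x\<in>?Eig. eig_mult ?A x - b) \<le> (\<Sum>x\<in>?Eig. Polynomial.order x f)"
      by (rule sum_mono, rule le1)
    also have "\<dots> \<le> degree f" by (rule sum_order_le[OF finE f0])
    finally show ?thesis using degf by simp
  qed
  show ?thesis
  proof (intro conjI allI impI)
    show "int (\<Sum>x\<in>?Eig. eig_mult ?A x - b) \<le> l" using main lz by linarith
  next
    fix S assume S: "S \<subseteq> ?Eig \<and> S \<noteq> {}"
    have "(\<Sum>x\<in>S. eig_mult ?A x) \<le> (\<Sum>x\<in>S. b + (eig_mult ?A x - b))" by (rule sum_mono) simp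
    also have "\<dots> = card S * b + (\<Sum>x\<in>S. eig_mult ?A x - b)" by (simp add: sum.distrib)
    also have "(\<Sum>x\<in>S. eig_mult ?A x - b) \<le> (\<Sum>x\<in>?Eig. eig_mult ?A x - b)"
      by (rule sum_mono2[OF finE], insert S, auto)
    finally have "(\<Sum>x\<in>S. eig_mult ?A x) \<le> card S * b + G.lz" using main by linarith
    thus "int (\<Sum>x\<in>S. eig_mult ?A x) \<le> int (card S * b) + l" using lz by linarith
  qed
qed


end
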